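(* For every integer $n\ge 1$ there is a context-free grammar of size $O(\log n)$ whose language is exactly \[ L_n=\{(a+b)^k\,a\,(a+b)^{n-1}\,a\,(a+b)^{n-1-k} \mid 0\le k\le n-1\}\subseteq\{a,b\}^{2n}. \]
   Context: A context-free grammar is $G=(\Sigma,N,R,S)$ with terminals $\Sigma$, non-terminals $N$, rules $A\to W$ ($A\in N$, $W\in(\Sigma\cup N)^*$) and start symbol $S$. Its size is $|G|=\sum_{(A\to W)\in R}|W|$. *)

theory Defs
  imports Complex_Main
begin

datatype ('t, 'n) sym = Tm 't | Nt 'n

record ('t, 'n) cfg =
  rules :: "('n \<times> ('t, 'n) sym list) set"
  start :: 'n

definition cfg_size :: "('t, 'n) cfg \<Rightarrow> nat" where
  "cfg_size G = (\<Sum>(A, W) \<in> rules G. length W)"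

definition derive1 :: "('t, 'n) cfg \<Rightarrow> ('t, 'n) sym list \<Rightarrow> ('t, 'n) sym list \<Rightarrow> bool" where
  "derive1 G x y \<longleftrightarrow> (\<exists>u v A W. (A, W) \<in> rules G \<and> x = u @ [Nt A] @ v \<and> y = u @ W @ v)"

definition lang :: "('t, 'n) cfg \<Rightarrow> 't list set" where
  "lang G = {w. (derive1 G)\<^sup>*\<^sup>* [Nt (start G)] (map Tm w)}"

datatype ab = a | b

definition L :: "nat \<Rightarrow> ab list set" where
  "L n = {u @ [a] @ v @ [a] @ x | u v x k.
            k \<le> n - 1 \<and> length u = k \<and> length v = n - 1 \<and> length x = n - 1 - k}"

end

theory Submission
  imports Defs
begin

abbreviation D :: "('t,'n) cfg \<Rightarrow> ('t,'n) sym list \<Rightarrow> ('t,'n) sym list \<Rightarrow> bool" where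
  "D G \<equiv> (derive1 G)\<^sup>*\<^sup>*"

lemma derive1_ctx: "derive1 G x y \<Longrightarrow> derive1 G (p @ x @ q) (p @ y @ q)"
  unfolding derive1_def
  by (metis append.assoc)

lemma D_ctx: "D G x y \<Longrightarrow> D G (p @ x @ q) (p @ y @ q)"
proof (induction rule: rtranclp_induct)
  case base then show ?case by simp
next
  case (step y z) then show ?case
    by (meson derive1_ctx rtranclp.rtrancl_into_rtrancl)
qed

lemma D_app: "D G x (map Tm u) \<Longrightarrow> D G y (map Tm v) \<Longrightarrow> D G (x @ y) (map Tm (u @ v))"
proof -
  assume 1: "D G x (map Tm u)" and 2: "D G y (map Tm v)"
  have "D G ([] @ x @ y) ([] @ map Tm u @ y)" using D_ctx[OF 1] by blast
  moreover have "D G (map Tm u @ y @ []) (map Tm u @ map Tm v @ [])" using D_ctx[OF 2] by blast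
  ultimately show ?thesis by simp
qed

lemma D_rule: "(A, W) \<in> rules G \<Longrightarrow> D G W w \<Longrightarrow> D G [Nt A] w"
proof -
  assume r: "(A, W) \<in> rules G" and d: "D G W w"
  have "derive1 G [Nt A] W" unfolding derive1_def using r by (metis append.left_neutral append.right_neutral)
  then show ?thesis using d by (meson converse_rtranclp_into_rtranclp)
qed

lemma D_tm: "D G [Tm c] (map Tm [c])" by simp

lemma D_nil: "D G [] (map Tm [])" by simp

fun lsem :: "('n \<Rightarrow> 't list set) \<Rightarrow> ('t,'n) sym list \<Rightarrow> 't list set" where
  "lsem S [] = {[]}"
| "lsem S (Tm c # W) = (\<lambda>w. c # w) ` lsem S W"
| "lsem S (Nt B # W) = {u @ w | u w. u \<in> S B \<and> w \<in> lsem S W}"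

lemma lsem_append: "lsem S (xs @ ys) = {u @ v | u v. u \<in> lsem S xs \<and> v \<in> lsem S ys}"
proof (induction xs)
  case Nil then show ?case by simp
next
  case (Cons s xs)
  show ?case
  proof (cases s)
    case (Tm c)
    show ?thesis
    proof
      show "lsem S ((s # xs) @ ys) \<subseteq> {u @ v |u v. u \<in> lsem S (s # xs) \<and> v \<in> lsem S ys}"
      proof
        fix w assume "w \<in> lsem S ((s # xs) @ ys)"
        then obtain w' where w: "w = c # w'" and "w' \<in> lsem S (xs @ ys)" using Tm by auto
        then obtain u v where uv: "w' = u @ v" "u \<in> lsem S xs" "v \<in> lsem S ys" using Cons.IH by blast
        have "c # u \<in> lsem S (s # xs)" using Tm uv by simp
        moreover have "w = (c # u) @ v" using w uv by simp
        ultimately show "w \<in> {u @ v |u v. u \<in> lsem S (s # xs) \<and> v \<in> lsem S ys}"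
          using uv by blast
      qed
      show "{u @ v |u v. u \<in> lsem S (s # xs) \<and> v \<in> lsem S ys} \<subseteq> lsem S ((s # xs) @ ys)"
      proof
        fix w assume "w \<in> {u @ v |u v. u \<in> lsem S (s # xs) \<and> v \<in> lsem S ys}"
        then obtain u v where w: "w = u @ v" and u: "u \<in> lsem S (s # xs)" and v: "v \<in> lsem S ys" by blast
        from u obtain u' where u': "u = c # u'" "u' \<in> lsem S xs" using Tm by auto
        have "u' @ v \<in> lsem S (xs @ ys)" using Cons.IH u' v by blast
        then show "w \<in> lsem S ((s # xs) @ ys)" using w u' Tm by simp
      qed
    qed
  next
    case (Nt B)
    show ?thesis
    proof
      show "lsem S ((s # xs) @ ys) \<subseteq> {u @ v |u v. u \<in> lsem S (s # xs) \<and> v \<in> lsem S ys}"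
      proof
        fix w assume "w \<in> lsem S ((s # xs) @ ys)"
        then obtain p w' where w: "w = p @ w'" and p: "p \<in> S B" and "w' \<in> lsem S (xs @ ys)" using Nt by auto
        then obtain u v where uv: "w' = u @ v" "u \<in> lsem S xs" "v \<in> lsem S ys" using Cons.IH by blast
        have "p @ u \<in> lsem S (s # xs)" using Nt p uv by auto
        moreover have "w = (p @ u) @ v" using w uv by simp
        ultimately show "w \<in> {u @ v |u v. u \<in> lsem S (s # xs) \<and> v \<in> lsem S ys}"
          using uv by blast
      qed
      show "{u @ v |u v. u \<in> lsem S (s # xs) \<and> v \<in> lsem S ys} \<subseteq> lsem S ((s # xs) @ ys)"
      proof
        fix w assume "w \<in> {u @ v |u v. u \<in> lsem S (s # xs) \<and> v \<in> lsem S ys}"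
        then obtain u v where w: "w = u @ v" and u: "u \<in> lsem S (s # xs)" and v: "v \<in> lsem S ys" by blast
        from u obtain p u' where u': "u = p @ u'" "p \<in> S B" "u' \<in> lsem S xs" using Nt by auto
        have "u' @ v \<in> lsem S (xs @ ys)" using Cons.IH u' v by blast
        then have "p @ (u' @ v) \<in> lsem S (Nt B # (xs @ ys))" using u' by auto
        then show "w \<in> lsem S ((s # xs) @ ys)" using w u' Nt by simp
      qed
    qed
  qed
qed

lemma lsem_Tm: "lsem S (map Tm w) = {w}"
  by (induction w) auto

lemma lsem_derive1:
  assumes ok: "\<forall>(A, W) \<in> rules G. lsem S W \<subseteq> S A"
    and d: "derive1 G x y"
  shows "lsem S y \<subseteq> lsem S x"
proof -
  obtain u v A W where r: "(A, W) \<in> rules G" and x: "x = u @ [Nt A] @ v" and y: "y = u @ W @ v"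
    using d unfolding derive1_def by blast
  have "lsem S W \<subseteq> S A" using ok r by blast
  show ?thesis
  proof
    fix w assume "w \<in> lsem S y"
    then obtain p q where w: "w = p @ q" and p: "p \<in> lsem S u" and q: "q \<in> lsem S (W @ v)"
      unfolding y lsem_append[of S u] by blast
    then obtain r s where qq: "q = r @ s" and r: "r \<in> lsem S W" and s: "s \<in> lsem S v"
      unfolding lsem_append[of S W] by blast
    have "r \<in> S A" using r \<open>lsem S W \<subseteq> S A\<close> by blast
    then have "q \<in> lsem S (Nt A # v)" using qq s by auto
    then show "w \<in> lsem S x" unfolding x lsem_append[of S u] using w p by auto
  qed
qed

lemma lsem_D:
  assumes ok: "\<forall>(A, W) \<in> rules G. lsem S W \<subseteq> S A"
    and d: "D G x y"
  shows "lsem S y \<subseteq> lsem S x"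
  using d
proof (induction rule: rtranclp_induct)
  case base then show ?case by simp
next
  case (step y z) then show ?case using lsem_derive1[OF ok] by blast
qed

lemma lang_sound:
  assumes ok: "\<forall>(A, W) \<in> rules G. lsem S W \<subseteq> S A"
  shows "lang G \<subseteq> S (start G)"
proof
  fix w assume "w \<in> lang G"
  then have "D G [Nt (start G)] (map Tm w)" unfolding lang_def by simp
  from lsem_D[OF ok this] have "{w} \<subseteq> lsem S [Nt (start G)]" by (simp add: lsem_Tm)
  then show "w \<in> S (start G)" by simp
qed

lemma sum_set_le: "(\<Sum>x\<in>set xs. (f x :: nat)) \<le> sum_list (map f xs)"
proof (induction xs)
  case Nil then show ?case by simp
next
  case (Cons x xs)
  have "(\<Sum>x\<in>set (x#xs). f x) \<le> f x + (\<Sum>x\<in>set xs. f x)"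
    by (simp add: sum.insert_if)
  then show ?case using Cons by simp
qed

definition Rw :: "nat \<Rightarrow> ab list set \<Rightarrow> ab list set" where
  "Rw c B = {p @ x @ q | p x q. x \<in> B \<and> length p + length q = c}"

lemma RwI: "x \<in> B \<Longrightarrow> length p + length q = c \<Longrightarrow> w = p @ x @ q \<Longrightarrow> w \<in> Rw c B"
  unfolding Rw_def by blast

lemma Rw_left: "length u = s \<Longrightarrow> z \<in> Rw c B \<Longrightarrow> u @ z \<in> Rw (c + s) B"
proof -
  assume u: "length u = s" and "z \<in> Rw c B"
  then obtain p x q where z: "z = p @ x @ q" "x \<in> B" "length p + length q = c" unfolding Rw_def by blast
  have "u @ z = (u @ p) @ x @ q" using z by simp
  then show ?thesis using z u by (intro RwI[of x B "u @ p" q]) auto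
qed

lemma Rw_right: "z \<in> Rw c B \<Longrightarrow> length u = s \<Longrightarrow> z @ u \<in> Rw (c + s) B"
proof -
  assume u: "length u = s" and "z \<in> Rw c B"
  then obtain p x q where z: "z = p @ x @ q" "x \<in> B" "length p + length q = c" unfolding Rw_def by blast
  have "z @ u = p @ x @ (q @ u)" using z by simp
  then show ?thesis using z u by (intro RwI[of x B p "q @ u"]) auto
qed

lemma Rw_split:
  assumes w: "w \<in> Rw (c + s) B" and sc: "s \<le> c + 1"
  shows "(\<exists>u z. w = u @ z \<and> length u = s \<and> z \<in> Rw c B) \<or> (\<exists>z u. w = z @ u \<and> length u = s \<and> z \<in> Rw c B)"
proof -
  obtain p x q where ww: "w = p @ x @ q" "x \<in> B" "length p + length q = c + s" using w unfolding Rw_def by blast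
  show ?thesis
  proof (cases "s \<le> length p")
    case True
    define u where "u = take s p"
    define z where "z = drop s p @ x @ q"
    have "w = u @ z" unfolding u_def z_def ww by simp
    moreover have "length u = s" unfolding u_def using True by simp
    moreover have "z \<in> Rw c B" unfolding z_def using ww True by (intro RwI[of x B "drop s p" q]) auto
    ultimately show ?thesis by blast
  next
    case False
    then have qs: "s \<le> length q" using ww sc by linarith
    define m where "m = length q - s"
    define u where "u = drop m q"
    define z where "z = p @ x @ take m q"
    have "w = z @ u" unfolding u_def z_def ww by simp
    moreover have "length u = s" unfolding u_def m_def using qs by simp
    moreover have "z \<in> Rw c B" unfolding z_def using ww qs m_def by (intro RwI[of x B p "take m q"]) auto
    ultimately show ?thesis by blast
  qed
qed

lemma Rw_0: "Rw 0 B = B"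
proof
  show "Rw 0 B \<subseteq> B" unfolding Rw_def by auto
  show "B \<subseteq> Rw 0 B" by (auto intro: RwI[of _ B "[]" "[]"])
qed

lemma Rw_nil: "Rw c {[]} = {w. length w = c}"
proof -
  have "\<And>w. length w = c \<Longrightarrow> w \<in> Rw c {[]}"
    by (rule RwI[of "[]" _ _ "[]"]) auto
  then show ?thesis unfolding Rw_def by auto
qed

definition cc :: "nat \<Rightarrow> nat \<Rightarrow> nat" where
  "cc e t = 2^t - 1 + e mod 2^t"

lemma cc_0: "cc e 0 = 0" unfolding cc_def by simp

lemma cc_ge: "2^t \<le> cc e t + 1"
proof -
  have "(1::nat) \<le> 2^t" by simp
  then show ?thesis unfolding cc_def by linarith
qed

lemma cc_Suc: "cc e (Suc t) = cc e t + (if odd (e div 2^t) then 2^t + 2^t else 2^t)"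
proof -
  have m: "e mod 2^(Suc t) = 2^t * (e div 2^t mod 2) + e mod 2^t"
    using mod_mult2_eq[of e "2^t" 2] by (simp add: mult.commute)
  have "(1::nat) \<le> 2^t" by simp
  then show ?thesis unfolding cc_def m by (auto simp: odd_iff_mod_2_eq_one even_iff_mod_2_eq_zero)
qed

lemma cc_T: "2^T \<le> n \<Longrightarrow> n < 2^Suc T \<Longrightarrow> cc (n - 2^T) T = n - 1"
proof -
  assume 1: "2^T \<le> n" and 2: "n < 2^Suc T"
  have "n - 2^T < 2^T" using 1 2 by simp
  then have "(n - 2^T) mod 2^T = n - 2^T" by simp
  moreover have "(1::nat) \<le> 2^T" by simp
  ultimately show ?thesis unfolding cc_def using 1 by simp
qed

definition Core :: "nat \<Rightarrow> ab list set" where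
  "Core n = {[a] @ v @ [a] | v. length v = n - 1}"

lemma L_Rw: "L n = Rw (n - 1) (Core n)"
proof
  show "L n \<subseteq> Rw (n - 1) (Core n)"
  proof
    fix w assume "w \<in> L n"
    then obtain u v x k where w: "w = u @ [a] @ v @ [a] @ x" "k \<le> n - 1" "length u = k"
      "length v = n - 1" "length x = n - 1 - k" unfolding L_def by blast
    have "w = u @ ([a] @ v @ [a]) @ x" using w by simp
    moreover have "[a] @ v @ [a] \<in> Core n" unfolding Core_def using w by blast
    moreover have "length u + length x = n - 1" using w by simp
    ultimately show "w \<in> Rw (n - 1) (Core n)" unfolding Rw_def by blast
  qed
  show "Rw (n - 1) (Core n) \<subseteq> L n"
  proof
    fix w assume "w \<in> Rw (n - 1) (Core n)"
    then obtain p y q where w: "w = p @ y @ q" "y \<in> Core n" "length p + length q = n - 1"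
      unfolding Rw_def by blast
    then obtain v where y: "y = [a] @ v @ [a]" "length v = n - 1" unfolding Core_def by blast
    have "w = p @ [a] @ v @ [a] @ q" using w y by simp
    moreover have "length p \<le> n - 1" "length q = n - 1 - length p" using w by auto
    ultimately show "w \<in> L n" unfolding L_def using y by blast
  qed
qed

definition zr :: "nat \<Rightarrow> nat \<Rightarrow> nat \<Rightarrow> (nat \<times> (ab, nat) sym list) list" where
  "zr e k t = (if odd (e div 2^t) then
      [(3 * Suc t + k, [Nt (3*t), Nt (3*t), Nt (3*t+k)]),
       (3 * Suc t + k, [Nt (3*t), Nt (3*t+k), Nt (3*t)]),
       (3 * Suc t + k, [Nt (3*t+k), Nt (3*t), Nt (3*t)])]
    else [(3 * Suc t + k, [Nt (3*t), Nt (3*t+k)]), (3 * Suc t + k, [Nt (3*t+k), Nt (3*t)])])"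

definition lvl :: "nat \<Rightarrow> nat \<Rightarrow> (nat \<times> (ab, nat) sym list) list" where
  "lvl e t = (3 * Suc t, [Nt (3*t), Nt (3*t)]) # zr e 1 t @ zr e 2 t"

definition rl :: "nat \<Rightarrow> nat \<Rightarrow> (nat \<times> (ab, nat) sym list) list" where
  "rl n T = [(0, [Tm a]), (0, [Tm b]), (1, []), (2, [Tm a, Nt (3*T+1), Tm a])]
     @ concat (map (lvl (n - 2^T)) [0..<T])"

definition Gr :: "nat \<Rightarrow> nat \<Rightarrow> (ab, nat) cfg" where
  "Gr n T = \<lparr>rules = set (rl n T), start = 3*T+2\<rparr>"

lemma len_zr: "sum_list (map (\<lambda>(A, W). length W) (zr e k t)) \<le> 9"
  unfolding zr_def by simp

lemma len_lvl: "sum_list (map (\<lambda>(A, W). length W) (lvl e t)) \<le> 20"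
  using len_zr[of e 1 t] len_zr[of e 2 t] unfolding lvl_def by simp

lemma len_concat: "sum_list (map (\<lambda>(A, W). length W) (concat (map (lvl e) [0..<m]))) \<le> 20 * m"
proof (induction m)
  case 0 then show ?case by simp
next
  case (Suc m) then show ?case using len_lvl[of e m] by simp
qed

lemma size_Gr: "cfg_size (Gr n T) \<le> 5 + 20 * T"
proof -
  have "cfg_size (Gr n T) \<le> sum_list (map (\<lambda>(A, W). length W) (rl n T))"
    unfolding cfg_size_def Gr_def by (simp add: sum_set_le)
  also have "\<dots> \<le> 5 + 20 * T"
    using len_concat[of "n - 2^T" T] unfolding rl_def by simp
  finally show ?thesis .
qed

definition Sm :: "nat \<Rightarrow> nat \<Rightarrow> nat \<Rightarrow> ab list set" where
  "Sm n e m = (if m mod 3 = 0 then {w. length w = 2^(m div 3)}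
     else if m mod 3 = 1 then Rw (cc e (m div 3)) {[]} else Rw (cc e (m div 3)) (Core n))"

lemma Sm0: "Sm n e (3*t) = {w. length w = 2^t}" by (simp add: Sm_def)
lemma Sm1: "Sm n e (3*t+1) = Rw (cc e t) {[]}"
proof -
  have "(3*t+1) div 3 = t" "(3*t+1) mod 3 = 1" by presburger+
  then show ?thesis unfolding Sm_def by simp
qed
lemma Sm2: "Sm n e (3*t+2) = Rw (cc e t) (Core n)"
proof -
  have "(3*t+2) div 3 = t" "(3*t+2) mod 3 = 2" by presburger+
  then show ?thesis unfolding Sm_def by simp
qed

lemma zr_sound:
  assumes r: "(A, W) \<in> set (zr e k t)"
    and S0: "S (3*t) = {w. length w = 2^t}"
    and S1: "S (3*t+k) = Rw (cc e t) B"
    and S2: "S (3*Suc t+k) = Rw (cc e (Suc t)) B"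
  shows "lsem S W \<subseteq> S A"
proof (cases "odd (e div 2^t)")
  case True
  then have c: "cc e (Suc t) = cc e t + 2^t + 2^t" using cc_Suc[of e t] by simp
  have A: "A = 3*Suc t+k" using r True unfolding zr_def by auto
  have W: "W = [Nt (3*t), Nt (3*t), Nt (3*t+k)] \<or> W = [Nt (3*t), Nt (3*t+k), Nt (3*t)]
       \<or> W = [Nt (3*t+k), Nt (3*t), Nt (3*t)]" using r True unfolding zr_def by auto
  show ?thesis
  proof
    fix w assume w: "w \<in> lsem S W"
    show "w \<in> S A"
      unfolding A S2 c
    proof -
      from W show "w \<in> Rw (cc e t + 2 ^ t + 2 ^ t) B"
      proof (elim disjE)
        assume "W = [Nt (3*t), Nt (3*t), Nt (3*t+k)]"
        then obtain u1 u2 z where "w = u1 @ u2 @ z" "length u1 = 2^t" "length u2 = 2^t" "z \<in> Rw (cc e t) B"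
          using w S0 S1 by auto
        then show ?thesis using Rw_left by metis
      next
        assume "W = [Nt (3*t), Nt (3*t+k), Nt (3*t)]"
        then obtain u1 u2 z where "w = u1 @ z @ u2" "length u1 = 2^t" "length u2 = 2^t" "z \<in> Rw (cc e t) B"
          using w S0 S1 by auto
        then show ?thesis using Rw_left Rw_right by metis
      next
        assume "W = [Nt (3*t+k), Nt (3*t), Nt (3*t)]"
        then obtain u1 u2 z where "w = (z @ u1) @ u2" "length u1 = 2^t" "length u2 = 2^t" "z \<in> Rw (cc e t) B"
          using w S0 S1 by auto
        then show ?thesis using Rw_right by metis
      qed
    qed
  qed
next
  case False
  then have c: "cc e (Suc t) = cc e t + 2^t" using cc_Suc[of e t] by simp
  have A: "A = 3*Suc t+k" using r False unfolding zr_def by auto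
  have W: "W = [Nt (3*t), Nt (3*t+k)] \<or> W = [Nt (3*t+k), Nt (3*t)]"
    using r False unfolding zr_def by auto
  show ?thesis
  proof
    fix w assume w: "w \<in> lsem S W"
    show "w \<in> S A"
      unfolding A S2 c
    proof -
      from W show "w \<in> Rw (cc e t + 2 ^ t) B"
      proof (elim disjE)
        assume "W = [Nt (3*t), Nt (3*t+k)]"
        then obtain u1 z where "w = u1 @ z" "length u1 = 2^t" "z \<in> Rw (cc e t) B"
          using w S0 S1 by auto
        then show ?thesis using Rw_left by metis
      next
        assume "W = [Nt (3*t+k), Nt (3*t)]"
        then obtain u1 z where "w = z @ u1" "length u1 = 2^t" "z \<in> Rw (cc e t) B"
          using w S0 S1 by auto
        then show ?thesis using Rw_right by metis
      qed
    qed
  qed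
qed

lemma Gr_sound:
  assumes T1: "2^T \<le> n" and T2: "n < 2^Suc T"
  shows "lang (Gr n T) \<subseteq> L n"
proof -
  define e where "e = n - 2^T"
  define S where "S = Sm n e"
  have cT: "cc e T = n - 1" unfolding e_def using cc_T[OF T1 T2] .
  have ok': "lsem S W \<subseteq> S A" if "(A, W) \<in> rules (Gr n T)" for A W
  proof -
    from that have "(A, W) \<in> set (rl n T)" unfolding Gr_def by simp
    then consider "(A, W) = (0, [Tm a])" | "(A, W) = (0, [Tm b])" | "(A, W) = (1, [])"
      | "(A, W) = (2, [Tm a, Nt (3*T+1), Tm a])"
      | t where "t < T" "(A, W) \<in> set (lvl e t)"
      unfolding rl_def e_def by auto
    then show "lsem S W \<subseteq> S A"
    proof cases
      case 1 then show ?thesis unfolding S_def Sm_def by simp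
    next
      case 2 then show ?thesis unfolding S_def Sm_def by simp
    next
      case 3 then show ?thesis unfolding S_def Sm_def by (simp add: cc_0 Rw_0)
    next
      case 4
      have "S 2 = Core n" unfolding S_def Sm_def by (simp add: cc_0 Rw_0)
      moreover have "S (3*T+1) = {w. length w = n - 1}" unfolding S_def Sm1 cT Rw_nil ..
      ultimately show ?thesis using 4 unfolding Core_def by auto
    next
      case (5 t)
      have S0: "S (3*t) = {w. length w = 2^t}" "S (3*Suc t) = {w. length w = 2^Suc t}"
        unfolding S_def by (rule Sm0)+
      from 5(2) consider "(A, W) = (3 * Suc t, [Nt (3*t), Nt (3*t)])" | "(A, W) \<in> set (zr e 1 t)"
        | "(A, W) \<in> set (zr e 2 t)" unfolding lvl_def by auto
      then show ?thesis
      proof cases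
        case 1 then show ?thesis using S0 by auto
      next
        case 2 then show ?thesis
          by (rule zr_sound[where B = "{[]}"]) (simp_all only: S_def Sm0 Sm1)
      next
        case 3 then show ?thesis
          by (rule zr_sound[where B = "Core n"]) (simp_all only: S_def Sm0 Sm2)
      qed
    qed
  qed
  have ok: "\<forall>(A, W) \<in> rules (Gr n T). lsem S W \<subseteq> S A" using ok' by blast
  have "lang (Gr n T) \<subseteq> S (start (Gr n T))" by (rule lang_sound[OF ok])
  also have "S (start (Gr n T)) = L n" unfolding S_def Gr_def cfg.select_convs Sm2 cT L_Rw ..
  finally show ?thesis .
qed

lemma A_compl:
  assumes rA: "\<forall>t<T. (3 * Suc t, [Nt (3*t), Nt (3*t)]) \<in> rules G"
    and ra: "(0, [Tm a]) \<in> rules G" and rb: "(0, [Tm b]) \<in> rules G"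
  shows "t \<le> T \<Longrightarrow> length w = 2^t \<Longrightarrow> D G [Nt (3*t)] (map Tm w)"
proof (induction t arbitrary: w)
  case 0
  then obtain x where w: "w = [x]" by (auto simp: length_Suc_conv)
  show ?case
  proof (cases x)
    case a then show ?thesis using D_rule[OF ra D_tm] w by simp
  next
    case b then show ?thesis using D_rule[OF rb D_tm] w by simp
  qed
next
  case (Suc t)
  define u where "u = take (2^t) w"
  define v where "v = drop (2^t) w"
  have "length u = 2^t" "length v = 2^t" using Suc.prems unfolding u_def v_def by auto
  then have "D G [Nt (3*t)] (map Tm u)" "D G [Nt (3*t)] (map Tm v)" using Suc by auto
  then have "D G ([Nt (3*t)] @ [Nt (3*t)]) (map Tm (u @ v))" by (rule D_app)
  moreover have "u @ v = w" unfolding u_def v_def by simp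
  moreover have "(3 * Suc t, [Nt (3*t), Nt (3*t)]) \<in> rules G" using rA Suc.prems by auto
  ultimately show ?case using D_rule by fastforce
qed

lemma D_app3: "D G x (map Tm u) \<Longrightarrow> D G y (map Tm v) \<Longrightarrow> D G z (map Tm q) \<Longrightarrow>
   D G (x @ y @ z) (map Tm (u @ v @ q))"
  by (intro D_app)

lemma chain_compl:
  assumes rz: "\<forall>t<T. set (zr e k t) \<subseteq> rules G"
    and A: "\<forall>t<T. \<forall>w. length w = 2^t \<longrightarrow> D G [Nt (3*t)] (map Tm w)"
    and base: "\<forall>w\<in>B. D G [Nt k] (map Tm w)"
  shows "t \<le> T \<Longrightarrow> w \<in> Rw (cc e t) B \<Longrightarrow> D G [Nt (3*t+k)] (map Tm w)"
proof (induction t arbitrary: w)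
  case 0 then show ?case using base by (simp add: cc_0 Rw_0)
next
  case (Suc t)
  have tT: "t < T" using Suc.prems by simp
  have IH: "\<And>z. z \<in> Rw (cc e t) B \<Longrightarrow> D G [Nt (3*t+k)] (map Tm z)" using Suc tT by simp
  have AA: "\<And>u. length u = 2^t \<Longrightarrow> D G [Nt (3*t)] (map Tm u)" using A tT by blast
  have ge: "2^t \<le> cc e t + 1" by (rule cc_ge)
  have R: "set (zr e k t) \<subseteq> rules G" using rz tT by blast
  show ?case
  proof (cases "odd (e div 2^t)")
    case False
    then have w: "w \<in> Rw (cc e t + 2^t) B" using Suc.prems cc_Suc[of e t] by simp
    have r1: "(3 * Suc t + k, [Nt (3*t), Nt (3*t+k)]) \<in> rules G"
     and r2: "(3 * Suc t + k, [Nt (3*t+k), Nt (3*t)]) \<in> rules G"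
      using R False unfolding zr_def by auto
    from Rw_split[OF w ge] show ?thesis
    proof (elim disjE exE conjE)
      fix u z assume "w = u @ z" "length u = 2^t" "z \<in> Rw (cc e t) B"
      then have "D G ([Nt (3*t)] @ [Nt (3*t+k)]) (map Tm w)" using AA IH D_app by metis
      then show ?thesis using D_rule[OF r1] by simp
    next
      fix z u assume "w = z @ u" "length u = 2^t" "z \<in> Rw (cc e t) B"
      then have "D G ([Nt (3*t+k)] @ [Nt (3*t)]) (map Tm w)" using AA IH D_app by metis
      then show ?thesis using D_rule[OF r2] by simp
    qed
  next
    case True
    then have w: "w \<in> Rw ((cc e t + 2^t) + 2^t) B" using Suc.prems cc_Suc[of e t] by (simp add: add.assoc)
    have ge2: "2^t \<le> (cc e t + 2^t) + 1" using ge by simp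
    have r1: "(3 * Suc t + k, [Nt (3*t), Nt (3*t), Nt (3*t+k)]) \<in> rules G"
     and r2: "(3 * Suc t + k, [Nt (3*t), Nt (3*t+k), Nt (3*t)]) \<in> rules G"
     and r3: "(3 * Suc t + k, [Nt (3*t+k), Nt (3*t), Nt (3*t)]) \<in> rules G"
      using R True unfolding zr_def by auto
    from Rw_split[OF w ge2] show ?thesis
    proof (elim disjE exE conjE)
      fix u z assume wz: "w = u @ z" and u: "length u = 2^t" and z: "z \<in> Rw (cc e t + 2^t) B"
      from Rw_split[OF z ge] show ?thesis
      proof (elim disjE exE conjE)
        fix u' z' assume "z = u' @ z'" "length u' = 2^t" "z' \<in> Rw (cc e t) B"
        then have "D G ([Nt (3*t)] @ [Nt (3*t)] @ [Nt (3*t+k)]) (map Tm w)"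
          using AA IH D_app3 wz u by metis
        then show ?thesis using D_rule[OF r1] by simp
      next
        fix z' u' assume "z = z' @ u'" "length u' = 2^t" "z' \<in> Rw (cc e t) B"
        then have "D G ([Nt (3*t)] @ [Nt (3*t+k)] @ [Nt (3*t)]) (map Tm w)"
          using AA IH D_app3 wz u by metis
        then show ?thesis using D_rule[OF r2] by simp
      qed
    next
      fix z u assume wz: "w = z @ u" and u: "length u = 2^t" and z: "z \<in> Rw (cc e t + 2^t) B"
      from Rw_split[OF z ge] show ?thesis
      proof (elim disjE exE conjE)
        fix u' z' assume "z = u' @ z'" "length u' = 2^t" "z' \<in> Rw (cc e t) B"
        then have "D G ([Nt (3*t)] @ [Nt (3*t+k)] @ [Nt (3*t)]) (map Tm w)"
          using AA IH D_app3 wz u by (metis append.assoc)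
        then show ?thesis using D_rule[OF r2] by simp
      next
        fix z' u' assume "z = z' @ u'" "length u' = 2^t" "z' \<in> Rw (cc e t) B"
        then have "D G ([Nt (3*t+k)] @ [Nt (3*t)] @ [Nt (3*t)]) (map Tm w)"
          using AA IH D_app3 wz u by (metis append.assoc)
        then show ?thesis using D_rule[OF r3] by simp
      qed
    qed
  qed
qed

lemma Gr_compl:
  assumes T1: "2^T \<le> n" and T2: "n < 2^Suc T"
  shows "L n \<subseteq> lang (Gr n T)"
proof
  define e where "e = n - 2^T"
  define G where "G = Gr n T"
  have cT: "cc e T = n - 1" unfolding e_def using cc_T[OF T1 T2] .
  have R: "rules G = set (rl n T)" unfolding G_def Gr_def by simp
  have rA: "\<forall>t<T. (3 * Suc t, [Nt (3*t), Nt (3*t)]) \<in> rules G"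
    unfolding R rl_def lvl_def by auto
  have ra: "(0, [Tm a]) \<in> rules G" and rb: "(0, [Tm b]) \<in> rules G"
    and r1: "(1, []) \<in> rules G" and r2: "(2, [Tm a, Nt (3*T+1), Tm a]) \<in> rules G"
    unfolding R rl_def by auto
  have rz: "\<forall>t<T. set (zr e k t) \<subseteq> rules G" if "k = 1 \<or> k = 2" for k
    using that unfolding R rl_def lvl_def e_def by fastforce
  have A: "\<forall>t<T. \<forall>w. length w = 2^t \<longrightarrow> D G [Nt (3*t)] (map Tm w)"
    using A_compl[OF rA ra rb] by auto
  have X: "D G [Nt (3*T+1)] (map Tm v)" if "length v = n - 1" for v
  proof -
    have base: "\<forall>w\<in>{[]}. D G [Nt 1] (map Tm w)" using D_rule[OF r1 D_nil] by simp
    have "v \<in> Rw (cc e T) {[]}" using that cT by (simp add: Rw_nil)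
    then show ?thesis using chain_compl[OF rz[of 1] A base, of T v] by simp
  qed
  have base2: "\<forall>w\<in>Core n. D G [Nt 2] (map Tm w)"
  proof
    fix w assume "w \<in> Core n"
    then obtain v where w: "w = [a] @ v @ [a]" "length v = n - 1" unfolding Core_def by blast
    have "D G ([Tm a] @ [Nt (3*T+1)] @ [Tm a]) (map Tm ([a] @ v @ [a]))"
      using D_app3[OF D_tm X[OF w(2)] D_tm] .
    then show "D G [Nt 2] (map Tm w)" using D_rule[OF r2] w by simp
  qed
  fix w assume "w \<in> L n"
  then have "w \<in> Rw (cc e T) (Core n)" using cT L_Rw by simp
  then have "D G [Nt (3*T+2)] (map Tm w)" using chain_compl[OF rz[of 2] A base2, of T w] by simp
  then show "w \<in> lang (Gr n T)" unfolding lang_def G_def Gr_def by simp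
qed

theorem mainTheorem2:
  shows "\<exists>C::real. \<forall>n::nat. n \<ge> 1 \<longrightarrow>
           (\<exists>G :: (ab, nat) cfg. finite (rules G) \<and> lang G = L n \<and>
              real (cfg_size G) \<le> C * (1 + log 2 (real n)))"
proof (rule exI[of _ 25], intro allI impI)
  fix n :: nat assume n: "n \<ge> 1"
  obtain T where T1: "2^T \<le> n" and T2: "n < 2^(T+1)"
    using ex_power_ivl1[of 2 n] n by auto
  have T2': "n < 2^Suc T" using T2 by simp
  have fin: "finite (rules (Gr n T))" unfolding Gr_def by simp
  have lg: "lang (Gr n T) = L n" using Gr_sound[OF T1 T2'] Gr_compl[OF T1 T2'] by blast
  have "real T = log 2 (real (2^T))" by (simp add: log_nat_power)
  also have "\<dots> \<le> log 2 (real n)" using T1 n by (subst log_le_cancel_iff) auto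
  finally have Tl: "real T \<le> log 2 (real n)" .
  have "real (cfg_size (Gr n T)) \<le> 5 + 20 * real T" using size_Gr[of n T] by linarith
  also have "\<dots> \<le> 25 * (1 + log 2 (real n))" using Tl by (smt (verit) of_nat_0_le_iff)
  finally show "\<exists>G :: (ab, nat) cfg. finite (rules G) \<and> lang G = L n \<and>
              real (cfg_size G) \<le> 25 * (1 + log 2 (real n))" using fin lg by blast
qed

end
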